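(* In the multi-parameter setting described in the context, equality $H(\theta)=C_\Upsilon(\theta)$ holds if and only if $\langle w_j^{(l)}(\theta)|w_k(\theta)\rangle=0$ for all $j,k,l$ with $p_j(\theta),p_k(\theta)>0$, where $|w_j^{(l)}\rangle=\partial|w_j\rangle/\partial\theta^l$.
   Context: A multi-parameter quantum channel on density matrices on $\mathbb{C}^d$ is $\rho_0\mapsto\sum_kE_k(\theta)\rho_0E_k(\theta)^\dagger$ with $\theta=(\theta^1,\dots,\theta^m)\in\mathbb{R}^m$, Kraus operators differentiable in $\theta$, $\sum_kE_k^\dagger E_k=I$. The input is a fixed pure state $\rho_0=|\psi_0\rangle\langle\psi_0|$. Canonical Kraus operators $\{\Upsilon_k(\theta)\}_{k=1}^d$: a differentiable Kraus representation of the same channel with $\mathrm{tr}\{\Upsilon_k\rho_0\Upsilon_j^\dagger\}=\delta_{jk}p_k(\theta)$; the output is $\rho_{out}(\theta)=\sum_kp_k|w_k\rangle\langle w_k|$ with $\{|w_k(\theta)\rangle\}$ an orthonormal basis differentiable in $\theta$ and $|w_k\rangle=p_k^{-1/2}\Upsilon_k|\psi_0\rangle$ when $p_k>0$. Write $X^{(j)}=\partial X/\partial\theta^j$. The SM bound matrix is $C_\Upsilon(\theta)_{jk}=4\sum_l\mathrm{Re}\,\mathrm{tr}\{\Upsilon_l^{(j)}\rho_0\Upsilon_l^{(k)\dagger}\}$; the SLD quantum information matrix is $H(\theta)_{jk}=\mathrm{Re}\,\mathrm{tr}\{\lambda^{(j)}\rho_{out}\lambda^{(k)}\}$, with $\lambda^{(j)}$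 a self-adjoint solution of $\partial\rho_{out}/\partial\theta^j=\frac12(\rho_{out}\lambda^{(j)}+\lambda^{(j)}\rho_{out})$. *)

theory Defs
  imports "HOL-Analysis.Analysis"
begin

text \<open>Complex d x d matrices are complex^'n^'n with d = CARD('n);
parameters theta range over real^'m with m = CARD('m).\<close>

definition cadj :: "complex^'n^'n \<Rightarrow> complex^'n^'n" where
  "cadj A = (\<chi> i j. cnj (A $ j $ i))"

definition ctrace :: "complex^'n^'n \<Rightarrow> complex" where
  "ctrace A = (\<Sum>i\<in>UNIV. A $ i $ i)"

definition braket :: "complex^'n \<Rightarrow> complex^'n \<Rightarrow> complex" where
  "braket u v = (\<Sum>i\<in>UNIV. cnj (u $ i) * v $ i)"

definition ketbra :: "complex^'n \<Rightarrow> complex^'n \<Rightarrow> complex^'n^'n" where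
  "ketbra u v = (\<chi> i j. u $ i * cnj (v $ j))"

definition pderiv_at :: "(real^'m \<Rightarrow> 'b::real_normed_vector) \<Rightarrow> real^'m \<Rightarrow> 'm \<Rightarrow> 'b" where
  "pderiv_at f x j = frechet_derivative f (at x) (axis j 1)"

definition out_state :: "('k::finite \<Rightarrow> real^'m \<Rightarrow> complex^'n^'n) \<Rightarrow> complex^'n^'n \<Rightarrow> real^'m \<Rightarrow> complex^'n^'n" where
  "out_state Y rho0 x = (\<Sum>k\<in>UNIV. Y k x ** rho0 ** cadj (Y k x))"

definition SM_bound :: "('k::finite \<Rightarrow> real^'m \<Rightarrow> complex^'n^'n) \<Rightarrow> complex^'n^'n \<Rightarrow> real^'m \<Rightarrow> real^'m^'m" where
  "SM_bound Y rho0 x = (\<chi> j k. 4 * (\<Sum>l\<in>UNIV.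
      Re (ctrace (pderiv_at (Y l) x j ** rho0 ** cadj (pderiv_at (Y l) x k)))))"

definition SLD_info :: "complex^'n^'n \<Rightarrow> ('m \<Rightarrow> complex^'n^'n) \<Rightarrow> real^'m^'m" where
  "SLD_info rho lam = (\<chi> j k. Re (ctrace (lam j ** rho ** lam k)))"

end

theory Submission
  imports Defs
begin


lemma cadj_cadj[simp]: "cadj (cadj A) = A"
  by (simp add: cadj_def vec_eq_iff)

lemma cadj_mult: "cadj (A ** B) = cadj B ** cadj A"
  by (simp add: cadj_def vec_eq_iff matrix_matrix_mult_def mult.commute)

lemma cadj_component[simp]: "cadj A $ i $ j = cnj (A $ j $ i)"
  by (simp add: cadj_def)

lemma ketbra_sandwich: "A ** ketbra u v ** cadj B = ketbra (A *v u) (B *v v)"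
proof -
  have "(A ** ketbra u v ** cadj B) $ i $ j = (A *v u) $ i * cnj ((B *v v) $ j)" for i j
  proof -
    have "(A ** ketbra u v ** cadj B) $ i $ j = (\<Sum>m\<in>UNIV. (\<Sum>l\<in>UNIV. A $ i $ l * (u $ l * cnj (v $ m))) * cnj (B $ j $ m))"
      by (simp add: matrix_matrix_mult_def ketbra_def)
    also have "\<dots> = (\<Sum>m\<in>UNIV. (\<Sum>l\<in>UNIV. A $ i $ l * u $ l) * (cnj (B $ j $ m) * cnj (v $ m)))"
      by (intro sum.cong refl) (simp add: sum_distrib_left sum_distrib_right mult_ac)
    also have "\<dots> = (A *v u) $ i * cnj ((B *v v) $ j)"
      by (simp add: matrix_vector_mult_def sum_distrib_left)
    finally show ?thesis .
  qed
  then show ?thesis by (simp add: vec_eq_iff ketbra_def)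
qed

lemma ctrace_ketbra: "ctrace (ketbra x y) = braket y x"
  by (simp add: ctrace_def ketbra_def braket_def mult.commute)

lemma ctrace_comm: "ctrace (A ** B) = ctrace (B ** A)"
  unfolding ctrace_def matrix_matrix_mult_def
  by (simp, subst sum.swap) (simp add: mult.commute)

lemma braket_cnj: "cnj (braket u v) = braket v u"
  by (simp add: braket_def mult.commute)

lemma braket_add_right: "braket u (v + w) = braket u v + braket u w"
  by (simp add: braket_def distrib_left sum.distrib)
lemma braket_add_left: "braket (v + w) u = braket v u + braket w u"
  by (simp add: braket_def distrib_right sum.distrib)
lemma braket_diff_right: "braket u (v - w) = braket u v - braket u w"
  by (simp add: braket_def right_diff_distrib sum_subtractf)
lemma braket_smult_right: "braket u (c *s v) = c * braket u v"
  by (simp add: braket_def sum_distrib_left mult_ac)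
lemma braket_smult_left: "braket (c *s u) v = cnj c * braket u v"
  by (simp add: braket_def sum_distrib_left mult_ac)
lemma braket_scaleR_right: "braket u (c *\<^sub>R v) = of_real c * braket u v"
  unfolding braket_def by (simp add: vector_scaleR_component) (simp add: scaleR_conv_of_real sum_distrib_left mult_ac)
lemma braket_scaleR_left: "braket (c *\<^sub>R u) v = of_real c * braket u v"
  unfolding braket_def by (simp add: vector_scaleR_component) (simp add: scaleR_conv_of_real sum_distrib_left mult_ac)
lemma braket_zero_left[simp]: "braket 0 u = 0"
  by (simp add: braket_def)
lemma braket_zero_right[simp]: "braket u 0 = 0"
  by (simp add: braket_def)
lemma braket_sum_right: "braket u (\<Sum>k\<in>S. f k) = (\<Sum>k\<in>S. braket u (f k))"
  by (induct S rule: infinite_finite_induct) (simp_all add: braket_add_right)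
lemma braket_sum_left: "braket (\<Sum>k\<in>S. f k) u = (\<Sum>k\<in>S. braket (f k) u)"
  by (induct S rule: infinite_finite_induct) (simp_all add: braket_add_left)

lemma braket_mv: "braket u (A *v v) = braket (cadj A *v u) v"
proof -
  have "braket u (A *v v) = (\<Sum>i\<in>UNIV. \<Sum>j\<in>UNIV. cnj (u $ i) * A $ i $ j * v $ j)"
    unfolding braket_def matrix_vector_mult_def by (simp add: sum_distrib_left mult_ac)
  also have "\<dots> = (\<Sum>j\<in>UNIV. \<Sum>i\<in>UNIV. cnj (u $ i) * A $ i $ j * v $ j)"
    by (rule sum.swap)
  also have "\<dots> = braket (cadj A *v u) v"
    unfolding braket_def matrix_vector_mult_def by (simp add: sum_distrib_right sum_distrib_left mult_ac)
  finally show ?thesis .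
qed

lemma ketbra_mv: "ketbra u v *v x = braket v x *s u"
  by (simp add: vec_eq_iff ketbra_def matrix_vector_mult_def braket_def sum_distrib_left mult_ac)

lemma braket_self: "braket v v = of_real (\<Sum>i\<in>UNIV. (cmod (v $ i))^2)"
  unfolding braket_def of_real_sum
  by (intro sum.cong refl) (simp add: complex_norm_square[symmetric] mult.commute[of "cnj _"])

lemma braket_self_zero: "braket v v = 0 \<Longrightarrow> v = 0"
proof -
  assume "braket v v = 0"
  then have "(\<Sum>i\<in>UNIV. (cmod (v $ i))^2) = 0" unfolding braket_self by (simp only: of_real_eq_0_iff)
  then have "\<forall>i\<in>UNIV. (cmod (v $ i))^2 = 0"
    by (subst (asm) sum_nonneg_eq_0_iff) auto
  then show "v = 0" by (simp add: vec_eq_iff)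
qed

lemma braket_self_Re: "Re (braket v v) \<ge> 0" "Im (braket v v) = 0"
  by (simp_all add: braket_self sum_nonneg)

lemma mv_smult: "(A::complex^'n^'m) *v (c *s x) = c *s (A *v x)"
  unfolding vec_eq_iff matrix_vector_mult_def
  by (simp add: sum_distrib_left) (intro allI sum.cong refl; simp add: mult_ac)

lemma mv_sum: "A *v (\<Sum>k\<in>S. f k) = (\<Sum>k\<in>S. A *v f k)"
  by (induct S rule: infinite_finite_induct) (simp_all add: matrix_vector_right_distrib)

lemma onb_W:
  fixes b :: "'n::finite \<Rightarrow> complex^'n"
  assumes ON: "\<And>j k. braket (b j) (b k) = (if j = k then 1 else 0)"
  shows "(\<Sum>a\<in>UNIV. b a $ i * cnj (b a $ l)) = (if i = l then 1 else 0)"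
proof -
  define W :: "complex^'n^'n" where "W = (\<chi> i a. b a $ i)"
  have "cadj W ** W = mat 1"
    unfolding vec_eq_iff
    using ON by (simp add: W_def matrix_matrix_mult_def mat_def braket_def)
  then have "W ** cadj W = mat 1" by (rule matrix_left_right_inverse1)
  then have "(W ** cadj W) $ i $ l = mat 1 $ i $ l" by simp
  then show ?thesis by (simp add: W_def matrix_matrix_mult_def mat_def)
qed

lemma onb_expand:
  fixes b :: "'n::finite \<Rightarrow> complex^'n"
  assumes ON: "\<And>j k. braket (b j) (b k) = (if j = k then 1 else 0)"
  shows "x = (\<Sum>a\<in>UNIV. braket (b a) x *s b a)"
proof -
  have "x $ i = (\<Sum>a\<in>UNIV. braket (b a) x *s b a) $ i" for i
  proof -
    have "(\<Sum>l\<in>UNIV. (if i = l then 1 else 0) * x $ l) = (\<Sum>l\<in>UNIV. if i = l then x $ l else 0)"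
      by (intro sum.cong) auto
    then have "x $ i = (\<Sum>l\<in>UNIV. (if i = l then 1 else 0) * x $ l)" by simp
    also have "\<dots> = (\<Sum>l\<in>UNIV. \<Sum>a\<in>UNIV. b a $ i * cnj (b a $ l) * x $ l)"
      by (simp only: onb_W[OF ON, symmetric] sum_distrib_right)
    also have "\<dots> = (\<Sum>a\<in>UNIV. \<Sum>l\<in>UNIV. b a $ i * cnj (b a $ l) * x $ l)"
      by (rule sum.swap)
    also have "\<dots> = (\<Sum>a\<in>UNIV. braket (b a) x *s b a) $ i"
      by (simp add: sum_component braket_def sum_distrib_left sum_distrib_right mult_ac)
    finally show ?thesis .
  qed
  then show ?thesis by (simp add: vec_eq_iff)
qed

lemma onb_parseval:
  fixes b :: "'n::finite \<Rightarrow> complex^'n"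
  assumes ON: "\<And>j k. braket (b j) (b k) = (if j = k then 1 else 0)"
  shows "braket x y = (\<Sum>a\<in>UNIV. cnj (braket (b a) x) * braket (b a) y)"
proof -
  have "braket x y = braket x (\<Sum>a\<in>UNIV. braket (b a) y *s b a)"
    using onb_expand[OF ON, of y] by simp
  also have "\<dots> = (\<Sum>a\<in>UNIV. cnj (braket (b a) x) * braket (b a) y)"
    by (simp add: braket_sum_right braket_smult_right)
       (intro sum.cong refl; simp add: braket_cnj[of "b _" x, symmetric])
  finally show ?thesis .
qed

lemma onb_trace:
  fixes b :: "'n::finite \<Rightarrow> complex^'n"
  assumes ON: "\<And>j k. braket (b j) (b k) = (if j = k then 1 else 0)"
  shows "ctrace M = (\<Sum>a\<in>UNIV. braket (b a) (M *v b a))"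
proof -
  have "ctrace M = (\<Sum>i\<in>UNIV. \<Sum>l\<in>UNIV. M $ i $ l * (if l = i then 1 else 0))"
    unfolding ctrace_def
  proof (intro sum.cong refl)
    fix i
    have "(\<Sum>l\<in>UNIV. M $ i $ l * (if l = i then 1 else 0)) = (\<Sum>l\<in>UNIV. if l = i then M $ i $ l else 0)"
      by (intro sum.cong) auto
    then show "M $ i $ i = (\<Sum>l\<in>UNIV. M $ i $ l * (if l = i then 1 else 0))" by simp
  qed
  also have "\<dots> = (\<Sum>i\<in>UNIV. \<Sum>l\<in>UNIV. \<Sum>a\<in>UNIV. M $ i $ l * (b a $ l * cnj (b a $ i)))"
    by (simp only: onb_W[OF ON, symmetric] sum_distrib_left)
  also have "\<dots> = (\<Sum>i\<in>UNIV. \<Sum>a\<in>UNIV. \<Sum>l\<in>UNIV. M $ i $ l * (b a $ l * cnj (b a $ i)))"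
    by (intro sum.cong refl sum.swap)
  also have "\<dots> = (\<Sum>a\<in>UNIV. \<Sum>i\<in>UNIV. \<Sum>l\<in>UNIV. M $ i $ l * (b a $ l * cnj (b a $ i)))"
    by (rule sum.swap)
  also have "\<dots> = (\<Sum>a\<in>UNIV. braket (b a) (M *v b a))"
    by (simp add: braket_def matrix_vector_mult_def sum_distrib_left mult_ac)
  finally show ?thesis .
qed

lemma onb_prod:
  fixes b :: "'n::finite \<Rightarrow> complex^'n"
  assumes ON: "\<And>j k. braket (b j) (b k) = (if j = k then 1 else 0)"
  shows "braket (b a) ((A ** B) *v b c) = (\<Sum>d\<in>UNIV. braket (b a) (A *v b d) * braket (b d) (B *v b c))"
proof -
  have e: "B *v b c = (\<Sum>d\<in>UNIV. braket (b d) (B *v b c) *s b d)"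
    by (rule onb_expand[OF ON])
  have "(A ** B) *v b c = A *v (B *v b c)" by (simp add: matrix_vector_mul_assoc)
  also have "\<dots> = A *v (\<Sum>d\<in>UNIV. braket (b d) (B *v b c) *s b d)"
    using e by (rule arg_cong)
  also have "\<dots> = (\<Sum>d\<in>UNIV. braket (b d) (B *v b c) *s (A *v b d))"
    by (simp only: mv_sum mv_smult)
  finally have "braket (b a) ((A ** B) *v b c) = braket (b a) (\<Sum>d\<in>UNIV. braket (b d) (B *v b c) *s (A *v b d))"
    by simp
  also have "\<dots> = (\<Sum>d\<in>UNIV. braket (b a) (A *v b d) * braket (b d) (B *v b c))"
    by (simp only: braket_sum_right braket_smult_right mult.commute)
  finally show ?thesis .
qed

lemma cs: "r *\<^sub>R (z::complex) = of_real r * z"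
  by (rule scaleR_conv_of_real)

lemma bb_braket: "bounded_bilinear (braket :: complex^'n \<Rightarrow> complex^'n \<Rightarrow> complex)"
  unfolding bilinear_conv_bounded_bilinear[symmetric] bilinear_def
  by (auto intro!: linearI simp: braket_add_left braket_add_right braket_scaleR_left braket_scaleR_right
      cs vector_scaleR_component)

lemma ketbra_add_left: "ketbra (u + v) w = ketbra u w + ketbra v w"
  by (simp add: ketbra_def vec_eq_iff distrib_right)
lemma ketbra_add_right: "ketbra w (u + v) = ketbra w u + ketbra w v"
  by (simp add: ketbra_def vec_eq_iff distrib_left)
lemma ketbra_scaleR_left: "ketbra (r *\<^sub>R u) w = r *\<^sub>R ketbra u w"
  by (simp add: ketbra_def vec_eq_iff cs vector_scaleR_component)
lemma ketbra_scaleR_right: "ketbra u (r *\<^sub>R w) = r *\<^sub>R ketbra u w"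
  by (simp add: ketbra_def vec_eq_iff cs vector_scaleR_component mult_ac)

lemma bb_ketbra: "bounded_bilinear (ketbra :: complex^'n \<Rightarrow> complex^'n \<Rightarrow> complex^'n^'n)"
  unfolding bilinear_conv_bounded_bilinear[symmetric] bilinear_def
  by (auto intro!: linearI simp: ketbra_add_left ketbra_add_right ketbra_scaleR_left ketbra_scaleR_right)

lemma bb_smult: "bounded_bilinear (\<lambda>(c::complex) (x::complex^'n). c *s x)"
  unfolding bilinear_conv_bounded_bilinear[symmetric] bilinear_def
  by (auto intro!: linearI simp: vec_eq_iff algebra_simps cs vector_scaleR_component)

lemma bl_mv: "bounded_linear (\<lambda>A::complex^'n^'n. A *v x)"
  unfolding linear_conv_bounded_linear[symmetric]
  by (auto intro!: linearI simp: matrix_vector_mult_def vec_eq_iff algebra_simps sum.distrib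
     cs vector_scaleR_component sum_distrib_left)

lemma pd: "(f has_derivative F) (at x) \<Longrightarrow> pderiv_at f x j = F (axis j 1)"
  unfolding pderiv_at_def by (metis frechet_derivative_at)

lemma mv_add_left: "((A::complex^'n^'m) + B) *v x = A *v x + B *v x"
  by (simp add: vec_eq_iff matrix_vector_mult_def distrib_right sum.distrib)

lemma mv_scaleR_left: "(r *\<^sub>R (A::complex^'n^'m)) *v x = r *\<^sub>R (A *v x)"
  by (simp add: vec_eq_iff matrix_vector_mult_def cs sum_distrib_left mult.assoc)

lemma mv_sum_left: "(\<Sum>k\<in>S. (M k::complex^'n^'m)) *v x = (\<Sum>k\<in>S. M k *v x)"
  by (induct S rule: infinite_finite_induct) (simp_all add: mv_add_left)

lemma onb_delta:
  fixes b :: "'n::finite \<Rightarrow> complex^'n"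
  assumes ON: "\<And>j k. braket (b j) (b k) = (if j = k then 1 else 0)"
  shows "(\<Sum>k\<in>UNIV. h k * braket (b a) (b k)) = h a"
    "(\<Sum>k\<in>UNIV. h k * braket (b k) (b a)) = h a"
  using ON by (simp_all add: if_distrib[of "\<lambda>t. h _ * t"] cong: if_cong)

lemma Re_ofreal_mult: "Re (complex_of_real r * z) = r * Re z"
  by simp

lemma halfsq: "(S::real) \<noteq> 0 \<Longrightarrow> S / 2 * (4 / S^2 * Y) = 2 * Y / S"
  by (simp add: field_simps power2_eq_square)




theorem lemma8:
  fixes E :: "nat \<Rightarrow> real^'m \<Rightarrow> complex^'n^'n" and nE :: nat
    and Y :: "'n \<Rightarrow> real^'m \<Rightarrow> complex^'n^'n"
    and psi0 :: "complex^'n"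
    and w :: "'n \<Rightarrow> real^'m \<Rightarrow> complex^'n"
    and p :: "'n \<Rightarrow> real^'m \<Rightarrow> real"
    and lam :: "'m \<Rightarrow> complex^'n^'n"
    and \<theta> :: "real^'m"
  assumes psi0_norm: "braket psi0 psi0 = 1"
    and E_diff: "\<And>k x. k < nE \<Longrightarrow> E k differentiable (at x)"
    and E_complete: "\<And>x. (\<Sum>k<nE. cadj (E k x) ** E k x) = mat 1"
    and same_channel: "\<And>x rho. (\<Sum>k\<in>UNIV. Y k x ** rho ** cadj (Y k x))
                                = (\<Sum>k<nE. E k x ** rho ** cadj (E k x))"
    and Y_diff: "\<And>k x. Y k differentiable (at x)"
    and canonical: "\<And>x j k. ctrace (Y k x ** ketbra psi0 psi0 ** cadj (Y j x))
                              = (if j = k then complex_of_real (p k x) else 0)"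
    and w_orthonormal: "\<And>x j k. braket (w j x) (w k x) = (if j = k then 1 else 0)"
    and w_diff: "\<And>k x. w k differentiable (at x)"
    and w_def: "\<And>k x. p k x > 0 \<Longrightarrow>
                   w k x = complex_of_real (1 / sqrt (p k x)) *s (Y k x *v psi0)"
    and out_decomp: "\<And>x. out_state Y (ketbra psi0 psi0) x
                          = (\<Sum>k\<in>UNIV. p k x *\<^sub>R ketbra (w k x) (w k x))"
    and lam_sa: "\<And>j. cadj (lam j) = lam j"
    and lam_SLD: "\<And>j. pderiv_at (out_state Y (ketbra psi0 psi0)) \<theta> j
        = (1/2::real) *\<^sub>R (out_state Y (ketbra psi0 psi0) \<theta> ** lam j
                            + lam j ** out_state Y (ketbra psi0 psi0) \<theta>)"
  shows "SLD_info (out_state Y (ketbra psi0 psi0) \<theta>) lam = SM_bound Y (ketbra psi0 psi0) \<theta>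
     \<longleftrightarrow> (\<forall>j k l. p j \<theta> > 0 \<and> p k \<theta> > 0 \<longrightarrow>
              braket (pderiv_at (w j) \<theta> l) (w k \<theta>) = 0)"
proof -
  define \<rho>0 where "\<rho>0 = ketbra psi0 psi0"
  define v where "v c x = Y c x *v psi0" for c x
  define f where "f c x = braket (w c x) (v c x)" for c x
  define P where "P c = p c \<theta>" for c
  define s where "s c = sqrt (P c)" for c
  have ON: "\<And>j k. braket (w j \<theta>) (w k \<theta>) = (if j = k then 1 else 0)"
    by (rule w_orthonormal)
  have trace_sand: "ctrace (A ** \<rho>0 ** cadj B) = braket (B *v psi0) (A *v psi0)" for A B
    by (simp add: \<rho>0_def ketbra_sandwich ctrace_ketbra)
  have pv: "complex_of_real (p c x) = braket (v c x) (v c x)" for c x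
    using canonical[where x=x and j=c and k=c] trace_sand[of "Y c x" "Y c x"] by (simp add: v_def \<rho>0_def)
  have p_nonneg: "p c x \<ge> 0" for c x
    using braket_self_Re(1)[of "v c x"] pv[of c x] by (metis Re_complex_of_real)
  have v_zero: "p c x = 0 \<Longrightarrow> v c x = 0" for c x
    using pv[of c x] braket_self_zero by simp
  have vf: "v c x = f c x *s w c x \<and> f c x = complex_of_real (sqrt (p c x))" for c x
  proof (cases "p c x > 0")
    case True
    have wv: "w c x = complex_of_real (1 / sqrt (p c x)) *s v c x"
      using w_def[OF True] by (simp add: v_def)
    have sp: "sqrt (p c x) > 0" using True by simp
    have v1: "v c x = complex_of_real (sqrt (p c x)) *s w c x"
      using sp by (simp add: wv vec_eq_iff)
    have "f c x = complex_of_real (sqrt (p c x))"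
      unfolding f_def using w_orthonormal[where x=x and j=c and k=c]
      by (subst v1) (simp add: braket_smult_right)
    then show ?thesis using v1 by simp
  next
    case False
    then have "p c x = 0" using p_nonneg[of c x] by simp
    then show ?thesis using v_zero[of c x] by (simp add: f_def)
  qed
  have out_eq: "out_state Y \<rho>0 = (\<lambda>x. \<Sum>c\<in>UNIV. ketbra (v c x) (v c x))"
    by (simp add: fun_eq_iff out_state_def \<rho>0_def ketbra_sandwich v_def)
  define DY where "DY c = frechet_derivative (Y c) (at \<theta>)" for c
  have hY: "(Y c has_derivative DY c) (at \<theta>)" for c
    unfolding DY_def using Y_diff frechet_derivative_works by blast
  define Dw where "Dw c = frechet_derivative (w c) (at \<theta>)" for c
  have hw: "(w c has_derivative Dw c) (at \<theta>)" for c
    unfolding Dw_def using w_diff frechet_derivative_works by blast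
  define DV where "DV c h = DY c h *v psi0" for c h
  have hv: "(v c has_derivative DV c) (at \<theta>)" for c
    unfolding v_def DV_def using bounded_linear.has_derivative[OF bl_mv hY] .
  define Df where "Df c h = braket (w c \<theta>) (DV c h) + braket (Dw c h) (v c \<theta>)" for c h
  have hf: "(f c has_derivative Df c) (at \<theta>)" for c
    unfolding f_def Df_def using bounded_bilinear.FDERIV[OF bb_braket hw hv] .
  have hv2: "(v c has_derivative (\<lambda>h. f c \<theta> *s Dw c h + Df c h *s w c \<theta>)) (at \<theta>)" for c
  proof -
    have "v c = (\<lambda>x. f c x *s w c x)" using vf by (simp add: fun_eq_iff)
    then show ?thesis using bounded_bilinear.FDERIV[OF bb_smult hf hw] by simp
  qed
  have DV_eq: "DV c h = f c \<theta> *s Dw c h + Df c h *s w c \<theta>" for c h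
    using has_derivative_unique[OF hv hv2] by metis
  have Df_Im: "Im (Df c h) = 0" for c h
  proof -
    have "(\<lambda>x. Im (f c x)) = (\<lambda>x. 0)" using vf by (simp add: fun_eq_iff)
    moreover have "((\<lambda>x. Im (f c x)) has_derivative (\<lambda>h. Im (Df c h))) (at \<theta>)"
      using bounded_linear.has_derivative[OF bounded_linear_Im hf] .
    ultimately have "((\<lambda>x. 0::real) has_derivative (\<lambda>h. Im (Df c h))) (at \<theta>)" by simp
    from has_derivative_unique[OF this has_derivative_const] show ?thesis by metis
  qed
  have Df_zero: "P c = 0 \<Longrightarrow> Df c h = 0" for c h
  proof -
    assume P0: "P c = 0"
    have hre: "((\<lambda>x. Re (f c x)) has_derivative (\<lambda>h. Re (Df c h))) (at \<theta>)"
      using bounded_linear.has_derivative[OF bounded_linear_Re hf] .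
    have "\<forall>y\<in>UNIV. Re (f c \<theta>) \<le> Re (f c y)"
      using vf P0 p_nonneg by (simp add: P_def)
    then have "(\<lambda>h. Re (Df c h)) = (\<lambda>v. 0)"
      using differential_zero_maxmin[OF _ _ hre] by blast
    then have "Re (Df c h) = 0" by metis
    then show ?thesis using Df_Im[of c h] by (simp add: complex_eq_iff)
  qed
  have ortho_d: "braket (w a \<theta>) (Dw b h) + braket (Dw a h) (w b \<theta>) = 0" for a b h
  proof -
    have "(\<lambda>x. braket (w a x) (w b x)) = (\<lambda>x. if a = b then 1 else 0)"
      using w_orthonormal by (simp add: fun_eq_iff)
    moreover have "((\<lambda>x. braket (w a x) (w b x)) has_derivative
        (\<lambda>h. braket (w a \<theta>) (Dw b h) + braket (Dw a h) (w b \<theta>))) (at \<theta>)"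
      using bounded_bilinear.FDERIV[OF bb_braket hw hw] .
    ultimately have "((\<lambda>x. if a = b then 1 else 0) has_derivative
        (\<lambda>h. braket (w a \<theta>) (Dw b h) + braket (Dw a h) (w b \<theta>))) (at \<theta>)" by simp
    from has_derivative_unique[OF this has_derivative_const] show ?thesis by metis
  qed
  have hout: "(out_state Y \<rho>0 has_derivative
      (\<lambda>h. \<Sum>c\<in>UNIV. ketbra (v c \<theta>) (DV c h) + ketbra (DV c h) (v c \<theta>))) (at \<theta>)"
    unfolding out_eq
    by (intro has_derivative_sum bounded_bilinear.FDERIV[OF bb_ketbra] hv)
  define e where "e j = (axis j 1 :: real^'m)" for j
  define wd where "wd c j = Dw c (e j)" for c j
  have wd_pd: "pderiv_at (w c) \<theta> j = wd c j" for c j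
    unfolding wd_def e_def by (rule pd[OF hw])
  define Vd where "Vd c j = DV c (e j)" for c j
  have Yd_pd: "pderiv_at (Y c) \<theta> j *v psi0 = Vd c j" for c j
    unfolding Vd_def DV_def e_def by (simp add: pd[OF hY])
  define F where "F c j = Re (Df c (e j))" for c j
  have Df_real: "Df c (e j) = complex_of_real (F c j)" for c j
    using Df_Im[of c "e j"] by (simp add: F_def complex_eq_iff)
  have F_zero: "P c = 0 \<Longrightarrow> F c j = 0" for c j
    using Df_zero by (simp add: F_def)
  define g where "g j a b = braket (w a \<theta>) (wd b j)" for j a b
  have g_skew: "g j a b + cnj (g j b a) = 0" for j a b
    using ortho_d[of a b "e j"] by (simp add: g_def wd_def braket_cnj)
  have P_nonneg: "P c \<ge> 0" for c using p_nonneg by (simp add: P_def)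
  have s2: "s c * s c = P c" for c using P_nonneg[of c] by (simp add: s_def)
  have v\<theta>: "v c \<theta> = complex_of_real (s c) *s w c \<theta>" for c
    using vf[of c \<theta>] by (simp add: s_def P_def)
  have f\<theta>: "f c \<theta> = complex_of_real (s c)" for c
    using vf[of c \<theta>] by (simp add: s_def P_def)
  have Vd_eq: "Vd c j = complex_of_real (s c) *s wd c j + complex_of_real (F c j) *s w c \<theta>" for c j
    unfolding Vd_def DV_eq wd_def f\<theta> Df_real ..
  have pout: "pderiv_at (out_state Y \<rho>0) \<theta> j = (\<Sum>c\<in>UNIV. ketbra (v c \<theta>) (Vd c j) + ketbra (Vd c j) (v c \<theta>))" for j
    unfolding Vd_def e_def by (rule pd[OF hout])
  define mel where "mel M a b = braket (w a \<theta>) (M *v w b \<theta>)" for M a b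
  define \<rho> where "\<rho> = out_state Y \<rho>0 \<theta>"
  have rho_mel: "mel \<rho> a d = (if a = d then complex_of_real (P a) else 0)" for a d
  proof -
    have "\<rho> = (\<Sum>k\<in>UNIV. p k \<theta> *\<^sub>R ketbra (w k \<theta>) (w k \<theta>))"
      using out_decomp by (simp add: \<rho>_def \<rho>0_def)
    then have "mel \<rho> a d = (\<Sum>k\<in>UNIV. complex_of_real (P k) * (braket (w k \<theta>) (w d \<theta>) * braket (w a \<theta>) (w k \<theta>)))"
      by (simp add: mel_def mv_sum_left mv_scaleR_left ketbra_mv braket_sum_right braket_scaleR_right
          braket_smult_right P_def)
    also have "\<dots> = (if a = d then complex_of_real (P a) else 0)"
      using ON by (simp add: if_distrib[of "\<lambda>t. _ * t"] cong: if_cong)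
    finally show ?thesis .
  qed
  have bw_v: "braket (w a \<theta>) (v c \<theta>) = (if a = c then complex_of_real (s c) else 0)" for a c
    using ON[of a c] by (simp add: v\<theta> braket_smult_right)
  have bv_w: "braket (v c \<theta>) (w b \<theta>) = (if c = b then complex_of_real (s c) else 0)" for b c
    using ON[of c b] by (simp add: v\<theta> braket_smult_left)
  have bw_Vd: "braket (w a \<theta>) (Vd b j) = complex_of_real (s b) * g j a b + (if a = b then complex_of_real (F b j) else 0)" for a b j
    using ON[of a b] by (simp add: Vd_eq braket_add_right braket_smult_right g_def)
  have bVd_w: "braket (Vd a j) (w b \<theta>) = - complex_of_real (s a) * g j a b + (if a = b then complex_of_real (F a j) else 0)" for a b j
  proof -
    have "braket (wd a j) (w b \<theta>) = - g j a b"
      using g_skew[of j a b] braket_cnj[of "w b \<theta>" "wd a j"] by (simp add: g_def eq_neg_iff_add_eq_0 add.commute)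
    then show ?thesis
      using ON[of a b] by (simp add: Vd_eq braket_add_left braket_smult_left)
  qed
  define D where "D j a b = mel (pderiv_at (out_state Y \<rho>0) \<theta> j) a b" for j a b
  have D_eq: "D j a b = (if a = b then complex_of_real (2 * s a * F a j) else 0)
      + complex_of_real (P b - P a) * g j a b" for j a b
  proof -
    have "D j a b = (\<Sum>c\<in>UNIV. braket (Vd c j) (w b \<theta>) * braket (w a \<theta>) (v c \<theta>)
                                + braket (v c \<theta>) (w b \<theta>) * braket (w a \<theta>) (Vd c j))"
      by (simp add: D_def mel_def pout mv_sum_left mv_add_left ketbra_mv braket_sum_right
          braket_add_right braket_smult_right)
    also have "\<dots> = braket (Vd a j) (w b \<theta>) * complex_of_real (s a) + complex_of_real (s b) * braket (w a \<theta>) (Vd b j)"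
      by (simp add: bw_v bv_w sum.distrib if_distrib[of "\<lambda>t. _ * t"] if_distrib[of "\<lambda>t. t * _"] cong: if_cong)
    also have "\<dots> = (if a = b then complex_of_real (2 * s a * F a j) else 0)
      + complex_of_real (P b - P a) * g j a b"
      by (simp add: bw_Vd bVd_w algebra_simps s2[symmetric])
    finally show ?thesis .
  qed
  define Lt where "Lt j a b = mel (lam j) a b" for j a b
  have mel_prod: "mel (A ** B) a c = (\<Sum>d\<in>UNIV. mel A a d * mel B d c)" for A B a c
    unfolding mel_def by (rule onb_prod[OF ON])
  have mel_rL: "mel (\<rho> ** lam j) a b = complex_of_real (P a) * Lt j a b" for j a b
    unfolding mel_def onb_prod[OF ON] Lt_def
    using rho_mel by (simp add: mel_def if_distrib[of "\<lambda>t. t * _"] cong: if_cong)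
  have mel_Lr: "mel (lam j ** \<rho>) a b = Lt j a b * complex_of_real (P b)" for j a b
    unfolding mel_def onb_prod[OF ON] Lt_def
    using rho_mel by (simp add: mel_def if_distrib[of "\<lambda>t. _ * t"] cong: if_cong)
  have D_Lt: "D j a b = complex_of_real ((P a + P b) / 2) * Lt j a b" for j a b
  proof -
    have "D j a b = mel ((1/2::real) *\<^sub>R (\<rho> ** lam j + lam j ** \<rho>)) a b"
      unfolding D_def using lam_SLD[of j] by (simp add: \<rho>_def \<rho>0_def)
    also have "\<dots> = complex_of_real (1/2) * (mel (\<rho> ** lam j) a b + mel (lam j ** \<rho>) a b)"
      by (simp add: mel_def mv_scaleR_left mv_add_left braket_scaleR_right braket_add_right)
    also have "\<dots> = complex_of_real ((P a + P b) / 2) * Lt j a b"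
      by (simp add: mel_rL mel_Lr algebra_simps)
    finally show ?thesis .
  qed
  have Lt_adj: "Lt j b a = cnj (Lt j a b)" for j a b
    unfolding Lt_def mel_def braket_mv lam_sa braket_cnj ..
  have H_eq: "SLD_info \<rho> lam $ j $ k = (\<Sum>a\<in>UNIV. \<Sum>b\<in>UNIV. P b * Re (Lt j a b * cnj (Lt k a b)))" for j k
  proof -
    have "SLD_info \<rho> lam $ j $ k = Re (\<Sum>a\<in>UNIV. mel ((lam j ** \<rho>) ** lam k) a a)"
      by (simp add: SLD_info_def onb_trace[OF ON] mel_def matrix_mul_assoc)
    also have "\<dots> = Re (\<Sum>a\<in>UNIV. \<Sum>b\<in>UNIV. Lt j a b * complex_of_real (P b) * Lt k b a)"
      unfolding mel_prod[of "lam j ** \<rho>"] mel_Lr by (simp add: Lt_def)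
    also have "\<dots> = (\<Sum>a\<in>UNIV. \<Sum>b\<in>UNIV. P b * Re (Lt j a b * cnj (Lt k a b)))"
    proof -
      have eq: "Lt j a b * complex_of_real (P b) * Lt k b a = complex_of_real (P b) * (Lt j a b * cnj (Lt k a b))" for a b
        using Lt_adj[of k b a] by simp
      show ?thesis unfolding eq Re_sum by (simp only: Re_ofreal_mult)
    qed
    finally show ?thesis .
  qed
  have Re_gcc: "Re (g j c c) = 0" for j c
    using g_skew[of j c c] by (simp add: complex_eq_iff)
  have bVV: "braket (Vd c k) (Vd c j) = complex_of_real (P c) * braket (wd c k) (wd c j)
      + complex_of_real (s c * F c j) * cnj (g k c c) + complex_of_real (s c * F c k) * g j c c
      + complex_of_real (F c k * F c j)" for c j k
  proof -
    have "braket (wd c k) (w c \<theta>) = cnj (g k c c)" by (simp add: g_def braket_cnj)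
    then show ?thesis
      using ON[of c c]
      by (simp add: Vd_eq braket_add_left braket_add_right braket_smult_left braket_smult_right
          g_def algebra_simps s2[symmetric])
  qed
  have ReVV: "Re (braket (Vd c k) (Vd c j)) = F c j * F c k + P c * (\<Sum>a\<in>UNIV. Re (g j a c * cnj (g k a c)))" for c j k
  proof -
    have "braket (wd c k) (wd c j) = (\<Sum>a\<in>UNIV. cnj (g k a c) * g j a c)"
      unfolding g_def by (rule onb_parseval[OF ON])
    then have "Re (braket (wd c k) (wd c j)) = (\<Sum>a\<in>UNIV. Re (g j a c * cnj (g k a c)))"
      by (simp add: Re_sum mult.commute)
    then show ?thesis
      unfolding bVV using Re_gcc[of k c] Re_gcc[of j c] by (simp add: Re_ofreal_mult)
  qed
  have SM_eq: "SM_bound Y \<rho>0 \<theta> $ j $ k = (\<Sum>c\<in>UNIV. 4 * (F c j * F c k)) + (\<Sum>c\<in>UNIV. \<Sum>a\<in>UNIV. 4 * P c * Re (g j a c * cnj (g k a c)))" for j k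
  proof -
    have "SM_bound Y \<rho>0 \<theta> $ j $ k = 4 * (\<Sum>c\<in>UNIV. Re (braket (Vd c k) (Vd c j)))"
      by (simp add: SM_bound_def trace_sand Yd_pd)
    also have "\<dots> = (\<Sum>c\<in>UNIV. 4 * (F c j * F c k)) + (\<Sum>c\<in>UNIV. \<Sum>a\<in>UNIV. 4 * P c * Re (g j a c * cnj (g k a c)))"
      by (simp add: ReVV sum.distrib sum_distrib_left algebra_simps)
    finally show ?thesis .
  qed
  define R where "R j k a b = Re (g j a b * cnj (g k a b))" for j k a b
  define X where "X j k a b = Re (Lt j a b * cnj (Lt k a b))" for j k a b
  have R_sym: "R j k b a = R j k a b" for j k a b
  proof -
    have "g j b a = - cnj (g j a b)" "g k b a = - cnj (g k a b)"
      using g_skew[of j a b] g_skew[of k a b] by (simp_all add: complex_eq_iff)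
    then show ?thesis by (simp add: R_def)
  qed
  have X_sym: "X j k b a = X j k a b" for j k a b
    using Lt_adj[of j a b] Lt_adj[of k a b] by (simp add: X_def)
  have pair: "(P a + P b) / 2 * X j k a b = (if a = b then 4 * (F a j * F a k) else 0)
      + 2 * (P b - P a)^2 / (P a + P b) * R j k a b" for j k a b
  proof (cases "P a + P b = 0")
    case True
    then have "P a = 0" "P b = 0" using P_nonneg[of a] P_nonneg[of b] by linarith+
    then show ?thesis using True F_zero[of a j] F_zero[of b j] by simp
  next
    case False
    then have Spos: "P a + P b > 0" using P_nonneg[of a] P_nonneg[of b] by linarith
    have LtD: "Lt i a b = complex_of_real (2 / (P a + P b)) * D i a b" for i
    proof -
      have "complex_of_real (2 / (P a + P b)) * D i a b
          = complex_of_real (2 / (P a + P b) * ((P a + P b) / 2)) * Lt i a b"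
        unfolding D_Lt of_real_mult by (simp only: mult.assoc)
      also have "2 / (P a + P b) * ((P a + P b) / 2) = 1" using Spos by simp
      finally show ?thesis by simp
    qed
    have X1: "X j k a b = 4 / (P a + P b)^2 * Re (D j a b * cnj (D k a b))"
      unfolding X_def LtD by (simp add: power2_eq_square field_simps)
    show ?thesis
    proof (cases "a = b")
      case True
      then have "Re (D j a b * cnj (D k a b)) = 4 * P a * (F a j * F a k)"
        using s2[of a] by (simp add: D_eq)
      moreover have "(P a + P b) / 2 * (4 / (P a + P b)^2 * (4 * P a * (F a j * F a k))) = 4 * (F a j * F a k)"
        using Spos True by (simp add: halfsq power2_eq_square)
      ultimately show ?thesis using True unfolding X1 by simp
    next
      case False
      then have "Re (D j a b * cnj (D k a b)) = (P b - P a)^2 * R j k a b"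
        by (simp add: D_eq R_def power2_eq_square algebra_simps)
      moreover have "(P a + P b) / 2 * (4 / (P a + P b)^2 * ((P b - P a)^2 * R j k a b))
          = 2 * (P b - P a)^2 / (P a + P b) * R j k a b"
      proof -
        have "(P a + P b) / 2 * (4 / (P a + P b)^2 * ((P b - P a)^2 * R j k a b)) = 2 * ((P b - P a)^2 * R j k a b) / (P a + P b)"
          using Spos by (intro halfsq) simp
        then show ?thesis by simp
      qed
      ultimately show ?thesis using False unfolding X1 by simp
    qed
  qed
  have symsum: "(\<Sum>a\<in>UNIV. \<Sum>b\<in>UNIV. P b * Z a b) = (\<Sum>a\<in>UNIV. \<Sum>b\<in>UNIV. (P a + P b) / 2 * Z a b)"
    if Zs: "\<And>a b. Z b a = Z a b" for Z :: "'n \<Rightarrow> 'n \<Rightarrow> real"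
  proof -
    have "(\<Sum>a\<in>UNIV. \<Sum>b\<in>UNIV. P b * Z a b) = (\<Sum>b\<in>UNIV. \<Sum>a\<in>UNIV. P b * Z a b)"
      by (rule sum.swap)
    also have "\<dots> = (\<Sum>a\<in>UNIV. \<Sum>b\<in>UNIV. P a * Z a b)"
      using Zs by simp
    finally have e: "(\<Sum>a\<in>UNIV. \<Sum>b\<in>UNIV. P b * Z a b) = (\<Sum>a\<in>UNIV. \<Sum>b\<in>UNIV. P a * Z a b)" .
    have "(\<Sum>a\<in>UNIV. \<Sum>b\<in>UNIV. (P a + P b) / 2 * Z a b)
        = ((\<Sum>a\<in>UNIV. \<Sum>b\<in>UNIV. P a * Z a b) + (\<Sum>a\<in>UNIV. \<Sum>b\<in>UNIV. P b * Z a b)) / 2"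
      by (simp add: sum.distrib sum_divide_distrib algebra_simps add_divide_distrib)
    then show ?thesis using e by simp
  qed
  have H3: "SLD_info \<rho> lam $ j $ k = (\<Sum>a\<in>UNIV. 4 * (F a j * F a k))
      + (\<Sum>a\<in>UNIV. \<Sum>b\<in>UNIV. 2 * (P b - P a)^2 / (P a + P b) * R j k a b)" for j k
  proof -
    have "SLD_info \<rho> lam $ j $ k = (\<Sum>a\<in>UNIV. \<Sum>b\<in>UNIV. P b * X j k a b)"
      unfolding H_eq X_def ..
    also have "\<dots> = (\<Sum>a\<in>UNIV. \<Sum>b\<in>UNIV. (P a + P b) / 2 * X j k a b)"
      by (rule symsum) (rule X_sym)
    also have "\<dots> = (\<Sum>a\<in>UNIV. \<Sum>b\<in>UNIV. (if a = b then 4 * (F a j * F a k) else 0)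
      + 2 * (P b - P a)^2 / (P a + P b) * R j k a b)"
      unfolding pair ..
    also have "\<dots> = (\<Sum>a\<in>UNIV. 4 * (F a j * F a k))
      + (\<Sum>a\<in>UNIV. \<Sum>b\<in>UNIV. 2 * (P b - P a)^2 / (P a + P b) * R j k a b)"
      by (simp add: sum.distrib)
    finally show ?thesis .
  qed
  have SM3: "SM_bound Y \<rho>0 \<theta> $ j $ k = (\<Sum>a\<in>UNIV. 4 * (F a j * F a k))
      + (\<Sum>a\<in>UNIV. \<Sum>b\<in>UNIV. 2 * (P a + P b) * R j k a b)" for j k
  proof -
    have "(\<Sum>c\<in>UNIV. \<Sum>a\<in>UNIV. 4 * P c * Re (g j a c * cnj (g k a c)))
        = (\<Sum>a\<in>UNIV. \<Sum>b\<in>UNIV. P b * (4 * R j k a b))"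
      unfolding R_def by (subst sum.swap) (simp add: mult_ac)
    also have "\<dots> = (\<Sum>a\<in>UNIV. \<Sum>b\<in>UNIV. (P a + P b) / 2 * (4 * R j k a b))"
      by (rule symsum) (simp add: R_sym)
    also have "\<dots> = (\<Sum>a\<in>UNIV. \<Sum>b\<in>UNIV. 2 * (P a + P b) * R j k a b)"
      by (intro sum.cong refl) (simp add: algebra_simps)
    finally show ?thesis unfolding SM_eq by simp
  qed
  define \<kappa> where "\<kappa> a b = 8 * P a * P b / (P a + P b)" for a b
  have kappa: "2 * (P a + P b) - 2 * (P b - P a)^2 / (P a + P b) = \<kappa> a b" for a b
  proof (cases "P a + P b = 0")
    case True
    then have "P a = 0" "P b = 0" using P_nonneg[of a] P_nonneg[of b] by linarith+
    then show ?thesis by (simp add: \<kappa>_def)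
  next
    case False
    then show ?thesis by (simp add: \<kappa>_def field_simps power2_eq_square)
  qed
  have diff: "SM_bound Y \<rho>0 \<theta> $ j $ k - SLD_info \<rho> lam $ j $ k = (\<Sum>a\<in>UNIV. \<Sum>b\<in>UNIV. \<kappa> a b * R j k a b)" for j k
  proof -
    have "SM_bound Y \<rho>0 \<theta> $ j $ k - SLD_info \<rho> lam $ j $ k
       = (\<Sum>a\<in>UNIV. \<Sum>b\<in>UNIV. (2 * (P a + P b) - 2 * (P b - P a)^2 / (P a + P b)) * R j k a b)"
      unfolding SM3 H3 by (simp add: sum_subtractf[symmetric] left_diff_distrib)
    then show ?thesis unfolding kappa .
  qed
  have kappa_nn: "\<kappa> a b \<ge> 0" for a b
    using P_nonneg[of a] P_nonneg[of b] by (simp add: \<kappa>_def)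
  have kappa_pos: "P a > 0 \<Longrightarrow> P b > 0 \<Longrightarrow> \<kappa> a b > 0" for a b
    by (simp add: \<kappa>_def)
  have kappa_zero: "\<not> (P a > 0 \<and> P b > 0) \<Longrightarrow> \<kappa> a b = 0" for a b
    using P_nonneg[of a] P_nonneg[of b] by (auto simp: \<kappa>_def)
  have Rjj: "R j j a b = (cmod (g j a b))^2" for j a b
    by (simp add: R_def complex_norm_square[symmetric])
  have cond_iff: "(\<forall>j k l. p j \<theta> > 0 \<and> p k \<theta> > 0 \<longrightarrow> braket (pderiv_at (w j) \<theta> l) (w k \<theta>) = 0)
      \<longleftrightarrow> (\<forall>l a b. P a > 0 \<and> P b > 0 \<longrightarrow> g l a b = 0)"
  proof -
    have "braket (pderiv_at (w j) \<theta> l) (w k \<theta>) = cnj (g l k j)" for j k l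
      by (simp add: wd_pd g_def braket_cnj)
    then show ?thesis by (auto simp: P_def)
  qed
  have lhs_iff: "SLD_info \<rho> lam = SM_bound Y \<rho>0 \<theta>
      \<longleftrightarrow> (\<forall>j k. (\<Sum>a\<in>UNIV. \<Sum>b\<in>UNIV. \<kappa> a b * R j k a b) = 0)"
  proof -
    have "SLD_info \<rho> lam = SM_bound Y \<rho>0 \<theta> \<longleftrightarrow> (\<forall>j k. SM_bound Y \<rho>0 \<theta> $ j $ k - SLD_info \<rho> lam $ j $ k = 0)"
      by (auto simp: vec_eq_iff)
    then show ?thesis unfolding diff .
  qed
  have main: "(\<forall>j k. (\<Sum>a\<in>UNIV. \<Sum>b\<in>UNIV. \<kappa> a b * R j k a b) = 0)
      \<longleftrightarrow> (\<forall>l a b. P a > 0 \<and> P b > 0 \<longrightarrow> g l a b = 0)"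
  proof
    assume H: "\<forall>j k. (\<Sum>a\<in>UNIV. \<Sum>b\<in>UNIV. \<kappa> a b * R j k a b) = 0"
    show "\<forall>l a b. P a > 0 \<and> P b > 0 \<longrightarrow> g l a b = 0"
    proof (intro allI impI)
      fix l a b assume pos: "P a > 0 \<and> P b > 0"
      have nn: "\<kappa> a b * R l l a b \<ge> 0" for a b
        using kappa_nn[of a b] by (simp add: Rjj)
      have nn2: "(\<Sum>b\<in>UNIV. \<kappa> a b * R l l a b) \<ge> 0" for a
        using nn by (simp add: sum_nonneg)
      from H have "(\<Sum>a\<in>UNIV. \<Sum>b\<in>UNIV. \<kappa> a b * R l l a b) = 0" by blast
      then have "\<forall>a\<in>UNIV. (\<Sum>b\<in>UNIV. \<kappa> a b * R l l a b) = 0"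
        using nn2 by (subst (asm) sum_nonneg_eq_0_iff) auto
      then have "(\<Sum>b\<in>UNIV. \<kappa> a b * R l l a b) = 0" by blast
      then have "\<forall>b\<in>UNIV. \<kappa> a b * R l l a b = 0"
        using nn by (subst (asm) sum_nonneg_eq_0_iff) auto
      then have "\<kappa> a b * R l l a b = 0" by blast
      then have "R l l a b = 0" using kappa_pos[of a b] pos by simp
      then show "g l a b = 0" by (simp add: Rjj)
    qed
  next
    assume G: "\<forall>l a b. P a > 0 \<and> P b > 0 \<longrightarrow> g l a b = 0"
    have z: "\<kappa> a b * R j k a b = 0" for j k a b
    proof (cases "P a > 0 \<and> P b > 0")
      case True then show ?thesis using G by (simp add: R_def)
    next
      case False then show ?thesis using kappa_zero by simp
    qed
    show "\<forall>j k. (\<Sum>a\<in>UNIV. \<Sum>b\<in>UNIV. \<kappa> a b * R j k a b) = 0" by (simp only: z sum.neutral_const) simp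
  qed
  show ?thesis
    using lhs_iff main cond_iff by (simp add: \<rho>_def \<rho>0_def)
qed


end
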